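(* Let $L$ and $K$ be finite-dimensional Lie superalgebras over a field $\mathbb{F}$ of characteristic different from $2$ and $3$, with $\dim L=\dim K$. Then $L$ and $K$ are isoclinic if and only if $L\cong K$.
   Context: A Lie superalgebra is a $\mathbb{Z}_2$-graded vector space $L=L_{\bar 0}\oplus L_{\bar 1}$ with a bilinear bracket satisfying $[L_\alpha,L_\beta]\subseteq L_{\alpha+\beta}$, graded skew-symmetry and the graded Jacobi identity. Homomorphisms are even (degree-preserving) linear maps preserving the bracket. $Z(L)=\{z\in L:[z,x]=0\ \forall x\in L\}$ is the center and $L'=[L,L]$ the derived superalgebra. Lie superalgebras $L$ and $M$ are isoclinic, written $L\sim M$, if there are Lie superalgebra isomorphisms $\varphi:L/Z(L)\to M/Z(M)$ and $\theta:L'\to M'$ such that $\theta([l,m])=[k,r]$ for all $l,m\in L$ and all $k,r\in M$ with $k+Z(M)=\varphi(l+Z(L))$ and $r+Z(M)=\varphi(m+Z(L))$. Dimension means superdimension $(\dim L_{\bar0}\mid\dim L_{\bar1})$. *)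

theory Defs
  imports Complex_Main
begin

text \<open>A Lie superalgebra over a field 'k is modelled on the whole of a type 'v
  (an abelian group), equipped with a scalar multiplication, a bracket, and
  the even and odd homogeneous subspaces.\<close>

record ('k, 'v) lsa =
  sc  :: "'k \<Rightarrow> 'v \<Rightarrow> 'v"
  br  :: "'v \<Rightarrow> 'v \<Rightarrow> 'v"
  ev  :: "'v set"
  od  :: "'v set"

definition homog :: "('k, 'v, 'm) lsa_scheme \<Rightarrow> 'v \<Rightarrow> bool" where
  "homog A x \<longleftrightarrow> x \<in> ev A \<or> x \<in> od A"

definition psign :: "('k::field, 'v, 'm) lsa_scheme \<Rightarrow> 'v \<Rightarrow> 'v \<Rightarrow> 'k" where
  "psign A x y = (if x \<in> od A \<and> y \<in> od A then -1 else 1)"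

definition lie_superalgebra :: "('k::field, 'v::ab_group_add, 'm) lsa_scheme \<Rightarrow> bool" where
  "lie_superalgebra A \<longleftrightarrow>
     vector_space (sc A) \<and>
     module.subspace (sc A) (ev A) \<and> module.subspace (sc A) (od A) \<and>
     ev A \<inter> od A = {0} \<and> (\<forall>x. \<exists>a\<in>ev A. \<exists>b\<in>od A. x = a + b) \<and>
     (\<forall>x y z. br A (x + y) z = br A x z + br A y z) \<and>
     (\<forall>x y z. br A x (y + z) = br A x y + br A x z) \<and>
     (\<forall>c x y. br A (sc A c x) y = sc A c (br A x y)) \<and>
     (\<forall>c x y. br A x (sc A c y) = sc A c (br A x y)) \<and>
     (\<forall>x\<in>ev A. \<forall>y\<in>ev A. br A x y \<in> ev A) \<and>
     (\<forall>x\<in>ev A. \<forall>y\<in>od A. br A x y \<in> od A) \<and>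
     (\<forall>x\<in>od A. \<forall>y\<in>ev A. br A x y \<in> od A) \<and>
     (\<forall>x\<in>od A. \<forall>y\<in>od A. br A x y \<in> ev A) \<and>
     (\<forall>x y. homog A x \<longrightarrow> homog A y \<longrightarrow>
        br A x y = - sc A (psign A x y) (br A y x)) \<and>
     (\<forall>x y z. homog A x \<longrightarrow> homog A y \<longrightarrow> homog A z \<longrightarrow>
        br A x (br A y z) = br A (br A x y) z + sc A (psign A x y) (br A y (br A x z)))"

definition fin_dim :: "('k::field, 'v::ab_group_add, 'm) lsa_scheme \<Rightarrow> bool" where
  "fin_dim A \<longleftrightarrow> (\<exists>B. finite B \<and> module.span (sc A) B = UNIV)"

definition sdim :: "('k::field, 'v::ab_group_add, 'm) lsa_scheme \<Rightarrow> nat \<times> nat" where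
  "sdim A = (vector_space.dim (sc A) (ev A), vector_space.dim (sc A) (od A))"

definition center :: "('k, 'v::zero, 'm) lsa_scheme \<Rightarrow> 'v set" where
  "center A = {z. \<forall>x. br A z x = 0}"

definition derived :: "('k::field, 'v::ab_group_add, 'm) lsa_scheme \<Rightarrow> 'v set" where
  "derived A = module.span (sc A) {br A x y | x y. True}"

definition lsa_iso :: "('k::field, 'v::ab_group_add, 'm) lsa_scheme \<Rightarrow>
    ('k, 'w::ab_group_add, 'n) lsa_scheme \<Rightarrow> ('v \<Rightarrow> 'w) \<Rightarrow> bool" where
  "lsa_iso A B f \<longleftrightarrow> bij f \<and> Vector_Spaces.linear (sc A) (sc B) f \<and>
     f ` ev A \<subseteq> ev B \<and> f ` od A \<subseteq> od B \<and>
     (\<forall>x y. f (br A x y) = br B (f x) (f y))"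

definition lsa_isomorphic (infix "\<cong>\<^sub>L" 50) where
  "A \<cong>\<^sub>L B \<longleftrightarrow> (\<exists>f. lsa_iso A B f)"

text \<open>Quotient L/Z(L): its elements are the cosets x + Z(L); operations on cosets are
  defined through representatives.\<close>
definition zcos :: "('k, 'v::ab_group_add, 'm) lsa_scheme \<Rightarrow> 'v \<Rightarrow> 'v set" where
  "zcos A x = (\<lambda>z. x + z) ` center A"

definition zquot :: "('k, 'v::ab_group_add, 'm) lsa_scheme \<Rightarrow> 'v set set" where
  "zquot A = range (zcos A)"

definition quot_iso :: "('k::field, 'v::ab_group_add, 'm) lsa_scheme \<Rightarrow>
    ('k, 'w::ab_group_add, 'n) lsa_scheme \<Rightarrow> ('v set \<Rightarrow> 'w set) \<Rightarrow> bool" where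
  "quot_iso A B \<phi> \<longleftrightarrow> bij_betw \<phi> (zquot A) (zquot B) \<and>
     (\<forall>x y u v. \<phi> (zcos A x) = zcos B u \<longrightarrow> \<phi> (zcos A y) = zcos B v \<longrightarrow>
        \<phi> (zcos A (x + y)) = zcos B (u + v) \<and>
        \<phi> (zcos A (br A x y)) = zcos B (br B u v)) \<and>
     (\<forall>c x u. \<phi> (zcos A x) = zcos B u \<longrightarrow> \<phi> (zcos A (sc A c x)) = zcos B (sc B c u)) \<and>
     (\<forall>x\<in>ev A. \<exists>u\<in>ev B. \<phi> (zcos A x) = zcos B u) \<and>
     (\<forall>x\<in>od A. \<exists>u\<in>od B. \<phi> (zcos A x) = zcos B u)"

definition derived_iso :: "('k::field, 'v::ab_group_add, 'm) lsa_scheme \<Rightarrow>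
    ('k, 'w::ab_group_add, 'n) lsa_scheme \<Rightarrow> ('v \<Rightarrow> 'w) \<Rightarrow> bool" where
  "derived_iso A B \<theta> \<longleftrightarrow> bij_betw \<theta> (derived A) (derived B) \<and>
     (\<forall>x\<in>derived A. \<forall>y\<in>derived A. \<theta> (x + y) = \<theta> x + \<theta> y \<and>
         \<theta> (br A x y) = br B (\<theta> x) (\<theta> y)) \<and>
     (\<forall>c. \<forall>x\<in>derived A. \<theta> (sc A c x) = sc B c (\<theta> x)) \<and>
     \<theta> ` (derived A \<inter> ev A) \<subseteq> ev B \<and> \<theta> ` (derived A \<inter> od A) \<subseteq> od B"

definition isoclinic :: "('k::field, 'v::ab_group_add, 'm) lsa_scheme \<Rightarrow>
    ('k, 'w::ab_group_add, 'n) lsa_scheme \<Rightarrow> bool" where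
  "isoclinic A B \<longleftrightarrow> (\<exists>\<phi> \<theta>. quot_iso A B \<phi> \<and> derived_iso A B \<theta> \<and>
     (\<forall>l m k r. zcos B k = \<phi> (zcos A l) \<longrightarrow> zcos B r = \<phi> (zcos A m) \<longrightarrow>
        \<theta> (br A l m) = br B k r))"

end

theory Submission
  imports Defs
begin

context finite_dimensional_vector_space_pair begin

lemma grade_lift:
  fixes V Z S :: "'b set" and W ZW :: "'c set" and R :: "'b \<Rightarrow> 'c \<Rightarrow> bool" and th :: "'b \<Rightarrow> 'c"
  assumes sV: "vs1.subspace V" and sW: "vs2.subspace W"
    and sZ: "vs1.subspace Z" and ZV: "Z \<subseteq> V"
    and sZW: "vs2.subspace ZW" and ZWW: "ZW \<subseteq> W"
    and sS: "vs1.subspace S" and SV: "S \<subseteq> V"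
    and dimeq: "vs1.dim V = vs2.dim W"
    and lth: "Vector_Spaces.linear s1 s2 th" and injth: "inj_on th S" and thW: "th ` S \<subseteq> W"
    and Radd: "\<And>x y u v. R x u \<Longrightarrow> R y v \<Longrightarrow> R (x + y) (u + v)"
    and Rsc: "\<And>x u c. R x u \<Longrightarrow> R (c *a x) (c *b u)"
    and Rdiff: "\<And>x u u'. R x u \<Longrightarrow> R x u' \<Longrightarrow> u \<in> W \<Longrightarrow> u' \<in> W \<Longrightarrow> u' - u \<in> ZW"
    and Rshift: "\<And>x u z. R x u \<Longrightarrow> z \<in> ZW \<Longrightarrow> R x (u + z)"
    and Rker: "\<And>x. x \<in> V \<Longrightarrow> R x 0 \<Longrightarrow> x \<in> Z"
    and RZ: "\<And>x. x \<in> Z \<Longrightarrow> R x 0"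
    and Rth: "\<And>x. x \<in> S \<Longrightarrow> R x (th x)"
    and Rex: "\<And>x. x \<in> V \<Longrightarrow> \<exists>u\<in>W. R x u"
    and Rsurj: "\<And>u. u \<in> W \<Longrightarrow> \<exists>x\<in>V. R x u"
  shows "\<exists>f. Vector_Spaces.linear s1 s2 f \<and> f ` V = W \<and> inj_on f V \<and> (\<forall>x\<in>V. R x (f x)) \<and> (\<forall>x\<in>S. f x = th x)"
proof -
  obtain B1 where B1: "B1 \<subseteq> S" "vs1.independent B1" "S \<subseteq> vs1.span B1"
    using vs1.basis_exists[of S] by metis
  have spB1: "vs1.span B1 = S"
    using B1 sS vs1.span_minimal by blast
  obtain B where B: "B1 \<subseteq> B" "B \<subseteq> B1 \<union> Z" "vs1.independent B" "B1 \<union> Z \<subseteq> vs1.span B"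
    using vs1.maximal_independent_subset_extend[of B1 "B1 \<union> Z"] B1 by blast
  have BV: "B \<subseteq> V" using B B1 SV ZV by blast
  obtain B3 where B3: "B \<subseteq> B3" "B3 \<subseteq> V" "vs1.independent B3" "V \<subseteq> vs1.span B3"
    using vs1.maximal_independent_subset_extend[OF BV B(3)] by blast
  define A where "A = B - B1"
  define U where "U = B3 - B"
  have fin3: "finite B3" using vs1.finiteI_independent B3(3) .
  have finB: "finite B" "finite B1" "finite A" "finite U"
  proof -
    show fB: "finite B" using fin3 B3(1) by (rule finite_subset[rotated])
    show "finite B1" using fB B(1) by (rule finite_subset[rotated])
    show "finite A" unfolding A_def using fB by simp
    show "finite U" unfolding U_def using fin3 by simp
  qed
  have AZ: "A \<subseteq> Z" using B A_def by blast
  have B3U: "B3 = B \<union> U" "B \<inter> U = {}" using B3 U_def by auto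
  have BA: "B = B1 \<union> A" "B1 \<inter> A = {}" using B A_def by auto
  define T where "T = th ` B1"
  have injB1: "inj_on th (vs1.span B1)" using injth spB1 by simp
  have indT: "vs2.independent T" unfolding T_def
    using linear_independent_injective_image[OF lth B1(2) injB1] .
  have TW: "T \<subseteq> W" using T_def B1 thW by blast
  obtain T' where T': "T \<subseteq> T'" "T' \<subseteq> T \<union> ZW" "vs2.independent T'" "T \<union> ZW \<subseteq> vs2.span T'"
    using vs2.maximal_independent_subset_extend[of T "T \<union> ZW"] indT by blast
  define C where "C = T' - T"
  have CZW: "C \<subseteq> ZW" using C_def T' by blast
  have finT': "finite T'" using vs2.finiteI_independent T'(3) .
  have TC: "T' = T \<union> C" "T \<inter> C = {}" using C_def T' by auto
  define hl where "hl u = (SOME w. w \<in> W \<and> R u w)" for u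
  have hl: "hl u \<in> W \<and> R u (hl u)" if "u \<in> V" for u
    unfolding hl_def using Rex[OF that] by (metis (mono_tags, lifting) someI_ex)
  have cons: "Vector_Spaces.linear s1 s2 (construct B3 q) \<and> (\<forall>x\<in>V. R x (construct B3 q x) \<and> construct B3 q x \<in> vs2.span (q ` B3))"
    if q: "\<And>b. b \<in> B3 \<Longrightarrow> q b \<in> W \<and> R b (q b)" for q
  proof -
    have lq: "Vector_Spaces.linear s1 s2 (construct B3 q)" using linear_construct[OF B3(3)] .
    have "R x (construct B3 q x) \<and> construct B3 q x \<in> vs2.span (q ` B3)" if "x \<in> vs1.span B3" for x
    proof (rule vs1.span_induct[OF that])
      fix x assume "x \<in> B3"
      then show "R x (construct B3 q x) \<and> construct B3 q x \<in> vs2.span (q ` B3)"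
        using q construct_basis[OF B3(3)] vs2.span_base by auto
    next
      have R0: "R 0 0" using RZ sZ vs1.subspace_0 by blast
      show "vs1.subspace {x. R x (construct B3 q x) \<and> construct B3 q x \<in> vs2.span (q ` B3)}"
        unfolding vs1.subspace_def
        using linear_0[OF lq] linear_add[OF lq] linear_scale[OF lq] R0 Radd Rsc
          vs2.span_zero vs2.span_add vs2.span_scale by auto
    qed
    then show ?thesis using lq B3(4) by blast
  qed
  define q0 where "q0 b = (if b \<in> B1 then th b else if b \<in> U then hl b else 0)" for b
  have q0: "q0 b \<in> W \<and> R b (q0 b)" if bB3: "b \<in> B3" for b
  proof -
    consider "b \<in> B1" | "b \<in> U" | "b \<in> A" "b \<notin> B1" "b \<notin> U" using bB3 unfolding A_def U_def by blast
    then show ?thesis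
    proof cases
      case 1 then have "b \<in> S" "q0 b = th b" using B1(1) by (blast, simp add: q0_def)
      then show ?thesis using thW Rth by (simp add: image_subset_iff)
    next
      case 2 then have "b \<in> V" "b \<notin> B1" using B3(2) B(1) unfolding U_def by blast+
      then have "b \<in> V" "q0 b = hl b" using 2 by (simp, simp add: q0_def)
      then show ?thesis using hl by simp
    next
      case 3 then have "b \<in> Z" "q0 b = 0" using AZ by (blast, simp add: q0_def)
      then show ?thesis using RZ vs2.subspace_0[OF sW] by simp
    qed
  qed
  note c0 = cons[of q0, OF q0]
  have spanW: "W \<subseteq> vs2.span (T' \<union> hl ` U)"
  proof
    fix w assume w: "w \<in> W"
    obtain x where x: "x \<in> V" "R x w" using Rsurj[OF w] by blast
    let ?h = "construct B3 q0"
    have hx: "R x (?h x)" "?h x \<in> vs2.span (q0 ` B3)" using c0 x by auto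
    have "q0 ` B3 \<subseteq> W" using q0 by auto
    then have "vs2.span (q0 ` B3) \<subseteq> W" using vs2.span_minimal sW by blast
    then have "?h x \<in> W" using hx by blast
    then have d: "w - ?h x \<in> ZW" using Rdiff[OF hx(1) x(2)] w by blast
    have "q0 ` B3 \<subseteq> vs2.span (T' \<union> hl ` U)"
    proof
      fix y assume "y \<in> q0 ` B3"
      then obtain b where b: "b \<in> B3" "y = q0 b" by blast
      show "y \<in> vs2.span (T' \<union> hl ` U)"
        using b T_def T'(1) vs2.span_base vs2.span_zero unfolding q0_def
        by (auto split: if_splits)
    qed
    then have "vs2.span (q0 ` B3) \<subseteq> vs2.span (T' \<union> hl ` U)"
      using vs2.span_minimal vs2.subspace_span by blast
    then have 1: "?h x \<in> vs2.span (T' \<union> hl ` U)" using hx by blast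
    have "ZW \<subseteq> vs2.span (T' \<union> hl ` U)" using T'(4) vs2.span_mono[of T' "T' \<union> hl ` U"] by blast
    then have 2: "w - ?h x \<in> vs2.span (T' \<union> hl ` U)" using d by blast
    have "w = ?h x + (w - ?h x)" by simp
    then show "w \<in> vs2.span (T' \<union> hl ` U)" using vs2.span_add[OF 1 2] by simp
  qed
  have "vs2.dim W \<le> card (T' \<union> hl ` U)"
    using vs2.dim_le_card[OF spanW] finT' finB by simp
  also have "\<dots> \<le> card T' + card (hl ` U)" by (rule card_Un_le)
  also have "\<dots> \<le> card T' + card U" using card_image_le[OF finB(4)] by simp
  finally have c1: "vs2.dim W \<le> card T' + card U" .
  have c2: "vs1.dim V = card B + card U"
    using vs1.basis_card_eq_dim[OF B3(2) B3(4) B3(3)] B3U card_Un_disjoint finB by metis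
  have c3: "card B = card B1 + card A" using BA card_Un_disjoint finB by metis
  have c4: "card T' = card T + card C" using TC card_Un_disjoint finT' finite_subset
    by (metis Un_upper1 Un_upper2)
  have c5: "card T = card B1" unfolding T_def
    using card_image inj_on_subset[OF injth B1(1)] by blast
  have "card A \<le> card C" using c1 c2 c3 c4 c5 dimeq by linarith
  then obtain g where g: "g ` A \<subseteq> C" "inj_on g A"
    using card_le_inj[OF finB(3), of C] finT' TC finite_subset by (metis Un_upper2)
  define q where "q b = (if b \<in> B1 then th b else if b \<in> U then hl b else g b)" for b
  have q: "q b \<in> W \<and> R b (q b)" if bB3: "b \<in> B3" for b
  proof -
    consider "b \<in> B1" | "b \<in> U" | "b \<in> A" "b \<notin> B1" "b \<notin> U" using bB3 unfolding A_def U_def by blast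
    then show ?thesis
    proof cases
      case 1 then have "b \<in> S" "q b = th b" using B1(1) by (blast, simp add: q_def)
      then show ?thesis using thW Rth by (simp add: image_subset_iff)
    next
      case 2 then have "b \<in> V" "b \<notin> B1" using B3(2) B(1) unfolding U_def by blast+
      then have "b \<in> V" "q b = hl b" using 2 by (simp, simp add: q_def)
      then show ?thesis using hl by simp
    next
      case 3
      then have "g b \<in> ZW" using g CZW by blast
      moreover have "b \<in> Z" "q b = g b" using AZ 3 by (blast, simp add: q_def)
      ultimately show ?thesis using Rshift[OF RZ, of b "g b"] ZWW by auto
    qed
  qed
  define f where "f = construct B3 q"
  have c: "Vector_Spaces.linear s1 s2 f" "\<And>x. x \<in> V \<Longrightarrow> R x (f x)" "\<And>x. x \<in> V \<Longrightarrow> f x \<in> vs2.span (q ` B3)"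
    using cons[of q, OF q] f_def by auto
  have fB: "f b = q b" if "b \<in> B3" for b using construct_basis[OF B3(3) that] f_def by simp
  have fth: "f x = th x" if "x \<in> S" for x
  proof -
    have "x \<in> vs1.span B1" using that B1 by blast
    then show ?thesis
    proof (rule linear_eq_on[OF c(1) lth])
      fix b assume "b \<in> B1"
      moreover then have "b \<in> B3" using B(1) B3(1) by blast
      ultimately show "f b = th b" using fB by (simp add: q_def)
    qed
  qed
  have "q ` B3 \<subseteq> W" using q by auto
  then have spW: "vs2.span (q ` B3) \<subseteq> W" using vs2.span_minimal sW by blast
  have fVW: "f ` V \<subseteq> W" using c(3) spW by blast
  have fAg: "f a = g a" if "a \<in> A" for a
  proof -
    have "a \<in> B3" "a \<notin> B1" "a \<notin> U" using that B3(1) unfolding A_def U_def by auto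
    then show ?thesis using fB by (simp add: q_def)
  qed
  have fA: "f ` A = g ` A" using fAg by (simp cong: image_cong)
  have inj: "inj_on f V"
    unfolding linear_inj_on_iff_eq_0[OF c(1) sV]
  proof (intro ballI impI)
    fix x assume x: "x \<in> V" "f x = 0"
    then have "x \<in> Z" using Rker c(2) by metis
    then have "x \<in> vs1.span B" using B(4) by blast
    then have "x \<in> vs1.span (B1 \<union> A)" using BA(1) by simp
    then obtain s a where sa: "x = s + a" "s \<in> vs1.span B1" "a \<in> vs1.span A"
      unfolding vs1.span_Un by blast
    have sS': "s \<in> S" using sa(2) spB1 by simp
    have "th s \<in> th ` vs1.span B1" using sa(2) by (rule imageI)
    then have fs: "f s \<in> vs2.span T" unfolding T_def linear_span_image[OF lth] using fth[OF sS'] by simp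
    have "f a \<in> f ` vs1.span A" using sa(3) by (rule imageI)
    then have "f a \<in> vs2.span (f ` A)" unfolding linear_span_image[OF c(1)] .
    moreover have fAC: "f ` A \<subseteq> C" using fA g(1) by simp
    ultimately have fa: "f a \<in> vs2.span C" using vs2.span_mono[OF fAC] by blast
    have "f s + f a = 0" using x(2) unfolding sa(1) linear_add[OF c(1)] .
    then have eq: "f s = - f a" by (simp add: eq_neg_iff_add_eq_0)
    have fsC: "f s \<in> vs2.span C" using vs2.span_neg[OF fa] unfolding eq .
    interpret p2: vector_space_pair s2 s2 by unfold_locales
    define p where "p = p2.construct T' (\<lambda>t. if t \<in> T then t else 0)"
    have lp: "Vector_Spaces.linear s2 s2 p" using p2.linear_construct[OF T'(3)] p_def by simp
    have lid: "Vector_Spaces.linear s2 s2 id" by (simp add: vs2.linear_id)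
    have lz: "Vector_Spaces.linear s2 s2 (\<lambda>_. 0)" by (simp add: p2.linear_zero)
    have "p (f s) = id (f s)"
      by (rule p2.linear_eq_on[OF lp lid fs]) (use p2.construct_basis[OF T'(3)] p_def T' in auto)
    moreover have "p (f s) = 0"
      by (rule p2.linear_eq_on[OF lp lz fsC]) (use p2.construct_basis[OF T'(3)] p_def TC in auto)
    ultimately have "f s = 0" by simp
    then have "th s = th 0" using fth[OF sS'] linear_0[OF lth] by simp
    then have s0: "s = 0" using injth sS' vs1.subspace_0[OF sS] inj_on_def by metis
    then have "f a = 0" using eq fth[OF sS'] linear_0[OF lth] by simp
    moreover have "vs2.independent (f ` A)" using fAC TC(1) T'(3) vs2.independent_mono by blast
    moreover have "inj_on f A" using g(2) fAg inj_on_cong by blast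
    ultimately have "a = 0" using linear_indep_image_lemma[OF c(1) finB(3)] sa by blast
    then show "x = 0" using s0 sa by simp
  qed
  have "f ` V = W"
  proof (rule vs2.subspace_dim_equal)
    show "vs2.subspace (f ` V)" using linear_subspace_image[OF c(1) sV] .
    show "f ` V \<subseteq> W" by fact
    show "vs2.subspace W" by fact
    have spV: "vs1.span V = V" using sV by (simp add: vs1.span_eq_iff)
    have "inj_on f (vs1.span V)" by (subst spV) (rule inj)
    then have "vs2.dim (f ` V) = vs1.dim V" by (rule dim_image_eq[OF c(1)])
    then show "vs2.dim W \<le> vs2.dim (f ` V)" using dimeq by simp
  qed
  then show ?thesis using c inj fth by blast
qed

end


lemma lsa_vs: "lie_superalgebra A \<Longrightarrow> vector_space (sc A)"
  by (simp add: lie_superalgebra_def)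

lemma lsa_evsub: assumes "lie_superalgebra A" shows "module.subspace (sc A) (ev A)"
  using assms unfolding lie_superalgebra_def by (elim conjE) (assumption | metis)

lemma lsa_odsub: assumes "lie_superalgebra A" shows "module.subspace (sc A) (od A)"
  using assms unfolding lie_superalgebra_def by (elim conjE) (assumption | metis)

lemma lsa_evod: assumes "lie_superalgebra A" shows "ev A \<inter> od A = {0}"
  using assms unfolding lie_superalgebra_def by (elim conjE) (assumption | metis)

lemma lsa_dec: assumes "lie_superalgebra A" shows "\<exists>a\<in>ev A. \<exists>b\<in>od A. x = a + b"
  using assms unfolding lie_superalgebra_def by (elim conjE) (assumption | metis)

lemma lsa_addL: assumes "lie_superalgebra A" shows "br A (x + y) z = br A x z + br A y z"
  using assms unfolding lie_superalgebra_def by (elim conjE) (assumption | metis)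

lemma lsa_addR: assumes "lie_superalgebra A" shows "br A x (y + z) = br A x y + br A x z"
  using assms unfolding lie_superalgebra_def by (elim conjE) (assumption | metis)

lemma lsa_scL: assumes "lie_superalgebra A" shows "br A (sc A c x) y = sc A c (br A x y)"
  using assms unfolding lie_superalgebra_def by (elim conjE) (assumption | metis)

lemma lsa_scR: assumes "lie_superalgebra A" shows "br A x (sc A c y) = sc A c (br A x y)"
  using assms unfolding lie_superalgebra_def by (elim conjE) (assumption | metis)

lemma lsa_ee: assumes "lie_superalgebra A" shows "x \<in> ev A \<Longrightarrow> y \<in> ev A \<Longrightarrow> br A x y \<in> ev A"
  using assms unfolding lie_superalgebra_def by (elim conjE) (assumption | metis)

lemma lsa_eo: assumes "lie_superalgebra A" shows "x \<in> ev A \<Longrightarrow> y \<in> od A \<Longrightarrow> br A x y \<in> od A"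
  using assms unfolding lie_superalgebra_def by (elim conjE) (assumption | metis)

lemma lsa_oe: assumes "lie_superalgebra A" shows "x \<in> od A \<Longrightarrow> y \<in> ev A \<Longrightarrow> br A x y \<in> od A"
  using assms unfolding lie_superalgebra_def by (elim conjE) (assumption | metis)

lemma lsa_oo: assumes "lie_superalgebra A" shows "x \<in> od A \<Longrightarrow> y \<in> od A \<Longrightarrow> br A x y \<in> ev A"
  using assms unfolding lie_superalgebra_def by (elim conjE) (assumption | metis)

lemma lsa_skew: assumes "lie_superalgebra A" shows "homog A x \<Longrightarrow> homog A y \<Longrightarrow> br A x y = - sc A (psign A x y) (br A y x)"
  using assms unfolding lie_superalgebra_def by (elim conjE) (assumption | metis)

lemma br_0L: assumes "lie_superalgebra A" shows "br A 0 x = 0"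
proof -
  have "br A (0 + 0) x = br A 0 x + br A 0 x" by (rule lsa_addL[OF assms])
  then show ?thesis by simp
qed

lemma br_0R: assumes "lie_superalgebra A" shows "br A x 0 = 0"
proof -
  have "br A x (0 + 0) = br A x 0 + br A x 0" by (rule lsa_addR[OF assms])
  then show ?thesis by simp
qed

lemma br_negL: assumes "lie_superalgebra A" shows "br A (- x) y = - br A x y"
proof -
  have "br A (- x + x) y = br A (- x) y + br A x y" by (rule lsa_addL[OF assms])
  then show ?thesis using br_0L[OF assms] by (simp add: eq_neg_iff_add_eq_0)
qed

lemma br_negR: assumes "lie_superalgebra A" shows "br A x (- y) = - br A x y"
proof -
  have "br A x (- y + y) = br A x (- y) + br A x y" by (rule lsa_addR[OF assms])
  then show ?thesis using br_0R[OF assms] by (simp add: eq_neg_iff_add_eq_0)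
qed

lemma br_diffL: assumes "lie_superalgebra A" shows "br A (x - y) z = br A x z - br A y z"
  using lsa_addL[OF assms, of x "- y" z] br_negL[OF assms] by simp

lemma br_diffR: assumes "lie_superalgebra A" shows "br A x (y - z) = br A x y - br A x z"
  using lsa_addR[OF assms, of x y "- z"] br_negR[OF assms] by simp

lemma center_0: assumes "lie_superalgebra A" shows "0 \<in> center A"
  using br_0L[OF assms] by (simp add: center_def)

lemma center_add: assumes "lie_superalgebra A" "a \<in> center A" "b \<in> center A" shows "a + b \<in> center A"
  using assms lsa_addL[OF assms(1)] by (simp add: center_def)

lemma center_neg: assumes "lie_superalgebra A" "a \<in> center A" shows "- a \<in> center A"
  using assms br_negL[OF assms(1)] by (simp add: center_def)

lemma center_diff: assumes "lie_superalgebra A" "a \<in> center A" "b \<in> center A" shows "a - b \<in> center A"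
  using assms br_diffL[OF assms(1)] by (simp add: center_def)

lemma center_sc: assumes "lie_superalgebra A" "a \<in> center A" shows "sc A c a \<in> center A"
proof -
  interpret vector_space "sc A" using lsa_vs[OF assms(1)] .
  show ?thesis using assms lsa_scL[OF assms(1)] by (simp add: center_def)
qed

lemma center_sub: assumes "lie_superalgebra A" shows "module.subspace (sc A) (center A)"
proof -
  interpret vector_space "sc A" using lsa_vs[OF assms(1)] .
  show ?thesis unfolding subspace_def using center_0 center_add center_sc assms by blast
qed

lemma zcos_eq: assumes "lie_superalgebra A" shows "zcos A u = zcos A v \<longleftrightarrow> u - v \<in> center A"
proof
  assume e: "zcos A u = zcos A v"
  have "u \<in> zcos A u" unfolding zcos_def using center_0[OF assms] by (auto intro: image_eqI[of _ _ 0])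
  then have "u \<in> zcos A v" using e by simp
  then obtain z where "z \<in> center A" "u = v + z" unfolding zcos_def by blast
  then show "u - v \<in> center A" by simp
next
  assume d: "u - v \<in> center A"
  show "zcos A u = zcos A v"
  proof
    show "zcos A u \<subseteq> zcos A v"
    proof
      fix y assume "y \<in> zcos A u"
      then obtain z where z: "z \<in> center A" "y = u + z" unfolding zcos_def by blast
      have "(u - v) + z \<in> center A" using center_add[OF assms d z(1)] .
      moreover have "y = v + ((u - v) + z)" using z by simp
      ultimately show "y \<in> zcos A v" unfolding zcos_def by blast
    qed
    show "zcos A v \<subseteq> zcos A u"
    proof
      fix y assume "y \<in> zcos A v"
      then obtain z where z: "z \<in> center A" "y = v + z" unfolding zcos_def by blast
      have "z - (u - v) \<in> center A" using center_diff[OF assms z(1) d] .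
      moreover have "y = u + (z - (u - v))" using z by simp
      ultimately show "y \<in> zcos A u" unfolding zcos_def by blast
    qed
  qed
qed

lemma ev_neg: assumes "lie_superalgebra A" "x \<in> ev A" shows "- x \<in> ev A"
proof -
  interpret vector_space "sc A" using lsa_vs[OF assms(1)] .
  show ?thesis using subspace_neg[OF lsa_evsub[OF assms(1)] assms(2)] .
qed

lemma od_neg: assumes "lie_superalgebra A" "x \<in> od A" shows "- x \<in> od A"
proof -
  interpret vector_space "sc A" using lsa_vs[OF assms(1)] .
  show ?thesis using subspace_neg[OF lsa_odsub[OF assms(1)] assms(2)] .
qed

lemma ev_add: assumes "lie_superalgebra A" "x \<in> ev A" "y \<in> ev A" shows "x + y \<in> ev A"
proof -
  interpret vector_space "sc A" using lsa_vs[OF assms(1)] .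
  show ?thesis using subspace_add[OF lsa_evsub[OF assms(1)] assms(2,3)] .
qed

lemma od_add: assumes "lie_superalgebra A" "x \<in> od A" "y \<in> od A" shows "x + y \<in> od A"
proof -
  interpret vector_space "sc A" using lsa_vs[OF assms(1)] .
  show ?thesis using subspace_add[OF lsa_odsub[OF assms(1)] assms(2,3)] .
qed

lemma ev_diff: assumes "lie_superalgebra A" "x \<in> ev A" "y \<in> ev A" shows "x - y \<in> ev A"
  using ev_add[OF assms(1,2) ev_neg[OF assms(1,3)]] by simp

lemma od_diff: assumes "lie_superalgebra A" "x \<in> od A" "y \<in> od A" shows "x - y \<in> od A"
  using od_add[OF assms(1,2) od_neg[OF assms(1,3)]] by simp

lemma ev_0: assumes "lie_superalgebra A" shows "0 \<in> ev A"
  using lsa_evod[OF assms] by blast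

lemma od_0: assumes "lie_superalgebra A" shows "0 \<in> od A"
  using lsa_evod[OF assms] by blast

lemma ev_sc: assumes "lie_superalgebra A" "x \<in> ev A" shows "sc A c x \<in> ev A"
proof -
  interpret vector_space "sc A" using lsa_vs[OF assms(1)] .
  show ?thesis using lsa_evsub[OF assms(1)] assms(2) unfolding subspace_def by blast
qed

lemma od_sc: assumes "lie_superalgebra A" "x \<in> od A" shows "sc A c x \<in> od A"
proof -
  interpret vector_space "sc A" using lsa_vs[OF assms(1)] .
  show ?thesis using lsa_odsub[OF assms(1)] assms(2) unfolding subspace_def by blast
qed

lemma evod_0: assumes "lie_superalgebra A" "x \<in> ev A" "x \<in> od A" shows "x = 0"
  using lsa_evod[OF assms(1)] assms(2,3) by blast

lemma dec_unique:
  assumes "lie_superalgebra A" "a \<in> ev A" "b \<in> od A" "a' \<in> ev A" "b' \<in> od A" "a + b = a' + b'"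
  shows "a = a' \<and> b = b'"
proof -
  have "a - a' = b' - b" using assms(6) by (simp add: algebra_simps)
  moreover have "a - a' \<in> ev A" using ev_diff assms by blast
  moreover have "b' - b \<in> od A" using od_diff assms by blast
  ultimately have "a - a' = 0" using evod_0[OF assms(1)] by metis
  then show ?thesis using assms(6) by simp
qed

lemma sum_ev_od_0:
  assumes "lie_superalgebra A" "a \<in> ev A" "b \<in> od A" "a + b = 0"
  shows "a = 0 \<and> b = 0"
  using dec_unique[OF assms(1-3) ev_0[OF assms(1)] od_0[OF assms(1)]] assms(4) by simp

lemma center_graded:
  assumes A: "lie_superalgebra A" and z: "z \<in> center A" and zab: "z = a + b"
    and a: "a \<in> ev A" and b: "b \<in> od A"
  shows "a \<in> center A \<and> b \<in> center A"
proof -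
  have he: "br A a y = 0 \<and> br A b y = 0" if y: "y \<in> ev A" for y
  proof -
    have "br A a y + br A b y = 0" using z zab lsa_addL[OF A] by (simp add: center_def)
    then show ?thesis using sum_ev_od_0[OF A lsa_ee[OF A a y] lsa_oe[OF A b y]] by simp
  qed
  have ho: "br A a y = 0 \<and> br A b y = 0" if y: "y \<in> od A" for y
  proof -
    have "br A b y + br A a y = 0" using z zab lsa_addL[OF A] by (simp add: center_def add.commute)
    then show ?thesis using sum_ev_od_0[OF A lsa_oo[OF A b y] lsa_eo[OF A a y]] by simp
  qed
  have "br A a y = 0 \<and> br A b y = 0" for y
  proof -
    obtain c d where cd: "c \<in> ev A" "d \<in> od A" "y = c + d" using lsa_dec[OF A] by blast
    show ?thesis using he[OF cd(1)] ho[OF cd(2)] cd(3) lsa_addR[OF A] by simp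
  qed
  then show ?thesis by (simp add: center_def)
qed

lemma br_center_R:
  assumes A: "lie_superalgebra A" and z: "z \<in> center A"
  shows "br A x z = 0"
proof -
  interpret vector_space "sc A" using lsa_vs[OF A] .
  obtain a b where ab: "a \<in> ev A" "b \<in> od A" "z = a + b" using lsa_dec[OF A] by blast
  have c: "a \<in> center A" "b \<in> center A" using center_graded[OF A z ab(3) ab(1,2)] by auto
  obtain c d where cd: "c \<in> ev A" "d \<in> od A" "x = c + d" using lsa_dec[OF A] by blast
  have h: "br A y w = 0" if "homog A y" "homog A w" "w \<in> center A" for y w
    using lsa_skew[OF A that(1,2)] that(3) by (simp add: center_def)
  have "homog A a" "homog A b" "homog A c" "homog A d" using ab cd by (auto simp: homog_def)
  then show ?thesis using h c ab(3) cd(3) lsa_addL[OF A] lsa_addR[OF A] by simp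
qed


lemma fin_basis:
  assumes A: "lie_superalgebra A" and f: "fin_dim A"
  obtains B where "finite_dimensional_vector_space (sc A) B"
proof -
  interpret vector_space "sc A" using lsa_vs[OF A] .
  obtain F where F: "finite F" "span F = UNIV" using f unfolding fin_dim_def by blast
  obtain B where B: "B \<subseteq> F" "independent B" "F \<subseteq> span B"
    using maximal_independent_subset[of F] by blast
  have "UNIV \<subseteq> span B" using B F span_mono[OF B(3)] by (simp add: span_span)
  then have "span B = UNIV" by blast
  moreover have "finite B" using B(1) F(1) by (rule finite_subset)
  ultimately have "finite_dimensional_vector_space (sc A) B"
    using B(2) by unfold_locales
  then show ?thesis by (rule that)
qed

lemma isoclinic_imp_iso:
  fixes L :: "('k::field, 'a::ab_group_add) lsa"
    and K :: "('k, 'b::ab_group_add) lsa"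
  assumes L: "lie_superalgebra L" and K: "lie_superalgebra K"
    and fL: "fin_dim L" and fK: "fin_dim K"
    and sd: "sdim L = sdim K"
    and ic: "isoclinic L K"
  shows "L \<cong>\<^sub>L K"
proof -
  obtain BL where BL: "finite_dimensional_vector_space (sc L) BL" using fin_basis[OF L fL] by blast
  obtain BK where BK: "finite_dimensional_vector_space (sc K) BK" using fin_basis[OF K fK] by blast
  interpret P: finite_dimensional_vector_space_pair "sc L" BL "sc K" BK
    using BL BK by (simp add: finite_dimensional_vector_space_pair_def)
  obtain \<phi> \<theta> where qi: "quot_iso L K \<phi>" and di: "derived_iso L K \<theta>"
    and compat: "\<And>l m k r. zcos K k = \<phi> (zcos L l) \<Longrightarrow> zcos K r = \<phi> (zcos L m) \<Longrightarrow>
        \<theta> (br L l m) = br K k r"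
    using ic unfolding isoclinic_def by blast
  define R where "R x u \<longleftrightarrow> \<phi> (zcos L x) = zcos K u" for x u
  have Radd: "R (x + y) (u + v)" if "R x u" "R y v" for x y u v
    using that qi unfolding R_def quot_iso_def by blast
  have Rbr: "R (br L x y) (br K u v)" if "R x u" "R y v" for x y u v
    using that qi unfolding R_def quot_iso_def by blast
  have Rsc: "R (sc L c x) (sc K c u)" if "R x u" for x u c
    using that qi unfolding R_def quot_iso_def by blast
  have Rev: "\<exists>u\<in>ev K. R x u" if "x \<in> ev L" for x
    using that qi unfolding R_def quot_iso_def by blast
  have Rod: "\<exists>u\<in>od K. R x u" if "x \<in> od L" for x
    using that qi unfolding R_def quot_iso_def by blast
  have bij\<phi>: "bij_betw \<phi> (zquot L) (zquot K)" using qi unfolding quot_iso_def by blast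
  have Rcen: "R x u' \<longleftrightarrow> u - u' \<in> center K" if "R x u" for x u u'
    using that zcos_eq[OF K] unfolding R_def by metis
  have Rall: "\<exists>u. R x u" for x
  proof -
    have "\<phi> (zcos L x) \<in> zquot K" using bij\<phi> unfolding bij_betw_def zquot_def by blast
    then show ?thesis unfolding R_def zquot_def by auto
  qed
  have Rinv: "\<exists>x. R x u" for u
  proof -
    have "zcos K u \<in> \<phi> ` zquot L" using bij\<phi> unfolding bij_betw_def zquot_def by auto
    then show ?thesis unfolding R_def zquot_def by auto
  qed
  have R00: "R 0 0"
  proof -
    obtain u where "R 0 u" using Rall by blast
    then have "R (sc L 0 0) (sc K 0 u)" by (rule Rsc)
    then show ?thesis using P.vs1.scale_zero_left P.vs2.scale_zero_left by simp
  qed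
  have Rker: "x \<in> center L" if "R x 0" for x
  proof -
    have "\<phi> (zcos L x) = \<phi> (zcos L 0)" using that R00 unfolding R_def by simp
    moreover have "zcos L x \<in> zquot L" "zcos L 0 \<in> zquot L" unfolding zquot_def by auto
    ultimately have "zcos L x = zcos L 0" using bij\<phi> unfolding bij_betw_def inj_on_def by blast
    then show ?thesis using zcos_eq[OF L] by simp
  qed
  have RZ: "R x 0" if "x \<in> center L" for x
  proof -
    have "zcos L x = zcos L 0" using that zcos_eq[OF L] by simp
    then show ?thesis using R00 unfolding R_def by simp
  qed
  have Rsurj_ev: "\<exists>x\<in>ev L. R x u" if u: "u \<in> ev K" for u
  proof -
    obtain x where x: "R x u" using Rinv by blast
    obtain a b where ab: "a \<in> ev L" "b \<in> od L" "x = a + b" using lsa_dec[OF L] by blast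
    obtain ua where ua: "ua \<in> ev K" "R a ua" using Rev[OF ab(1)] by blast
    obtain ub where ub: "ub \<in> od K" "R b ub" using Rod[OF ab(2)] by blast
    have "R x (ua + ub)" using Radd[OF ua(2) ub(2)] ab(3) by simp
    then have c: "u - (ua + ub) \<in> center K" using Rcen x by blast
    have e: "u - (ua + ub) = (u - ua) + (- ub)" by simp
    have "u - ua \<in> center K"
      using center_graded[OF K c e ev_diff[OF K u ua(1)] od_neg[OF K ub(1)]] by blast
    then have "ua - u \<in> center K" using center_neg[OF K] by fastforce
    then have "R a u" using Rcen[OF ua(2)] by blast
    then show ?thesis using ab(1) by blast
  qed
  have Rsurj_od: "\<exists>x\<in>od L. R x u" if u: "u \<in> od K" for u
  proof -
    obtain x where x: "R x u" using Rinv by blast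
    obtain a b where ab: "a \<in> ev L" "b \<in> od L" "x = a + b" using lsa_dec[OF L] by blast
    obtain ua where ua: "ua \<in> ev K" "R a ua" using Rev[OF ab(1)] by blast
    obtain ub where ub: "ub \<in> od K" "R b ub" using Rod[OF ab(2)] by blast
    have "R x (ua + ub)" using Radd[OF ua(2) ub(2)] ab(3) by simp
    then have c: "u - (ua + ub) \<in> center K" using Rcen x by blast
    have e: "u - (ua + ub) = (- ua) + (u - ub)" by simp
    have "u - ub \<in> center K"
      using center_graded[OF K c e ev_neg[OF K ua(1)] od_diff[OF K u ub(1)]] by blast
    then have "ub - u \<in> center K" using center_neg[OF K] by fastforce
    then have "R b u" using Rcen[OF ub(2)] by blast
    then show ?thesis using ab(2) by blast
  qed
  define DL where "DL = derived L"
  have sDL: "P.vs1.subspace DL" unfolding DL_def derived_def by simp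
  have bij\<theta>: "bij_betw \<theta> DL (derived K)"
    using di unfolding derived_iso_def DL_def by (elim conjE) assumption
  have hadd: "\<forall>x\<in>DL. \<forall>y\<in>DL. \<theta> (x + y) = \<theta> x + \<theta> y \<and> \<theta> (br L x y) = br K (\<theta> x) (\<theta> y)"
    using di unfolding derived_iso_def DL_def by (elim conjE) assumption
  have hsc: "\<forall>c. \<forall>x\<in>DL. \<theta> (sc L c x) = sc K c (\<theta> x)"
    using di unfolding derived_iso_def DL_def by (elim conjE) assumption
  have hev: "\<theta> ` (DL \<inter> ev L) \<subseteq> ev K"
    using di unfolding derived_iso_def DL_def by (elim conjE) assumption
  have hod: "\<theta> ` (DL \<inter> od L) \<subseteq> od K"
    using di unfolding derived_iso_def DL_def by (elim conjE) assumption
  have \<theta>add: "\<theta> (x + y) = \<theta> x + \<theta> y" if "x \<in> DL" "y \<in> DL" for x y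
    using that hadd by simp
  have \<theta>sc: "\<theta> (sc L c x) = sc K c (\<theta> x)" if "x \<in> DL" for x c
    using that hsc by simp
  have \<theta>ev: "\<theta> x \<in> ev K" if "x \<in> DL" "x \<in> ev L" for x
    using that hev by blast
  have \<theta>od: "\<theta> x \<in> od K" if "x \<in> DL" "x \<in> od L" for x
    using that hod by blast
  have DL0: "0 \<in> DL" using P.vs1.subspace_0[OF sDL] .
  have \<theta>0: "\<theta> 0 = 0" using \<theta>add[OF DL0 DL0] by simp
  have RD: "x \<in> DL \<and> R x (\<theta> x)" if "x \<in> DL" for x
  proof -
    have "x \<in> P.vs1.span {br L a b | a b. True}" using that unfolding DL_def derived_def .
    then show ?thesis
    proof (rule P.vs1.span_induct)
      fix g assume "g \<in> {br L a b | a b. True}"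
      then obtain a b where g: "g = br L a b" by blast
      obtain k where k: "R a k" using Rall by blast
      obtain r where r: "R b r" using Rall by blast
      have "\<theta> (br L a b) = br K k r" using compat k r unfolding R_def by metis
      moreover have "R (br L a b) (br K k r)" using Rbr[OF k r] .
      moreover have "g \<in> DL" unfolding g DL_def derived_def by (rule P.vs1.span_base) blast
      ultimately show "g \<in> DL \<and> R g (\<theta> g)" using g by simp
    next
      show "P.vs1.subspace {x. x \<in> DL \<and> R x (\<theta> x)}"
        unfolding P.vs1.subspace_def
      proof (intro conjI ballI allI)
        show "0 \<in> {x. x \<in> DL \<and> R x (\<theta> x)}" using DL0 \<theta>0 R00 by simp
      next
        fix x y assume "x \<in> {x. x \<in> DL \<and> R x (\<theta> x)}" "y \<in> {x. x \<in> DL \<and> R x (\<theta> x)}"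
        then show "x + y \<in> {x. x \<in> DL \<and> R x (\<theta> x)}"
          using \<theta>add Radd P.vs1.subspace_add[OF sDL] by simp
      next
        fix c x assume "x \<in> {x. x \<in> DL \<and> R x (\<theta> x)}"
        then show "sc L c x \<in> {x. x \<in> DL \<and> R x (\<theta> x)}"
          using \<theta>sc Rsc P.vs1.subspace_scale[OF sDL] by simp
      qed
    qed
  qed
  obtain BD where BD: "BD \<subseteq> DL" "P.vs1.independent BD" "DL \<subseteq> P.vs1.span BD"
    using P.vs1.basis_exists[of DL] by metis
  define \<theta>' where "\<theta>' = P.construct BD \<theta>"
  have l\<theta>': "Vector_Spaces.linear (sc L) (sc K) \<theta>'" unfolding \<theta>'_def by (rule P.linear_construct[OF BD(2)])
  have \<theta>'eq: "\<theta>' x = \<theta> x" if "x \<in> DL" for x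
  proof -
    have "x \<in> P.vs1.span BD" using that BD by blast
    then have "x \<in> DL \<and> \<theta>' x = \<theta> x"
    proof (rule P.vs1.span_induct)
      fix b assume "b \<in> BD"
      then show "b \<in> DL \<and> \<theta>' b = \<theta> b" using BD P.construct_basis[OF BD(2)] \<theta>'_def by auto
    next
      show "P.vs1.subspace {x. x \<in> DL \<and> \<theta>' x = \<theta> x}"
        unfolding P.vs1.subspace_def
        using DL0 \<theta>0 P.linear_0[OF l\<theta>'] P.linear_add[OF l\<theta>'] P.linear_scale[OF l\<theta>'] \<theta>add \<theta>sc
          P.vs1.subspace_add[OF sDL] P.vs1.subspace_scale[OF sDL] by simp
    qed
    then show ?thesis by simp
  qed
  have inj\<theta>': "inj_on \<theta>' DL"
    using bij\<theta> \<theta>'eq unfolding bij_betw_def by (metis inj_on_cong)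
  have sevL: "P.vs1.subspace (ev L)" using lsa_evsub[OF L] .
  have sevK: "P.vs2.subspace (ev K)" using lsa_evsub[OF K] .
  have sodL: "P.vs1.subspace (od L)" using lsa_odsub[OF L] .
  have sodK: "P.vs2.subspace (od K)" using lsa_odsub[OF K] .
  have scL: "P.vs1.subspace (center L)" using center_sub[OF L] .
  have scK: "P.vs2.subspace (center K)" using center_sub[OF K] .
  have dimev: "P.vs1.dim (ev L) = P.vs2.dim (ev K)" using sd unfolding sdim_def by simp
  have dimod: "P.vs1.dim (od L) = P.vs2.dim (od K)" using sd unfolding sdim_def by simp
  have Rdiff: "u' - u \<in> center K" if "R x u" "R x u'" for x u u'
    using Rcen[OF that(1)] that(2) center_neg[OF K] by fastforce
  have Rshift: "R x (u + z)" if "R x u" "z \<in> center K" for x u z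
    using Rcen[OF that(1)] that(2) center_neg[OF K] by simp
  obtain fe where fe: "Vector_Spaces.linear (sc L) (sc K) fe" "fe ` ev L = ev K" "inj_on fe (ev L)"
      "\<forall>x\<in>ev L. R x (fe x)" "\<forall>x\<in>DL \<inter> ev L. fe x = \<theta>' x"
  proof -
    have "\<exists>f. Vector_Spaces.linear (sc L) (sc K) f \<and> f ` ev L = ev K \<and> inj_on f (ev L) \<and>
        (\<forall>x\<in>ev L. R x (f x)) \<and> (\<forall>x\<in>DL \<inter> ev L. f x = \<theta>' x)"
    proof (rule P.grade_lift[where Z = "center L \<inter> ev L" and ZW = "center K \<inter> ev K"])
      show "P.vs1.subspace (ev L)" "P.vs2.subspace (ev K)" by fact+
      show "P.vs1.subspace (center L \<inter> ev L)" using P.vs1.subspace_inter[OF scL sevL] .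
      show "P.vs2.subspace (center K \<inter> ev K)" using P.vs2.subspace_inter[OF scK sevK] .
      show "P.vs1.subspace (DL \<inter> ev L)" using P.vs1.subspace_inter[OF sDL sevL] .
      show "center L \<inter> ev L \<subseteq> ev L" "center K \<inter> ev K \<subseteq> ev K" "DL \<inter> ev L \<subseteq> ev L" by auto
      show "P.vs1.dim (ev L) = P.vs2.dim (ev K)" by fact
      show "Vector_Spaces.linear (sc L) (sc K) \<theta>'" by fact
      show "inj_on \<theta>' (DL \<inter> ev L)" using inj\<theta>' by (rule inj_on_subset) auto
      show "\<theta>' ` (DL \<inter> ev L) \<subseteq> ev K" using \<theta>'eq \<theta>ev by auto
      show "\<And>x y u v. R x u \<Longrightarrow> R y v \<Longrightarrow> R (x + y) (u + v)" by (rule Radd)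
      show "\<And>x u c. R x u \<Longrightarrow> R (sc L c x) (sc K c u)" by (rule Rsc)
      show "\<And>x u u'. R x u \<Longrightarrow> R x u' \<Longrightarrow> u \<in> ev K \<Longrightarrow> u' \<in> ev K \<Longrightarrow> u' - u \<in> center K \<inter> ev K"
        using Rdiff ev_diff[OF K] by blast
      show "\<And>x u z. R x u \<Longrightarrow> z \<in> center K \<inter> ev K \<Longrightarrow> R x (u + z)" using Rshift by blast
      show "\<And>x. x \<in> ev L \<Longrightarrow> R x 0 \<Longrightarrow> x \<in> center L \<inter> ev L" using Rker by blast
      show "\<And>x. x \<in> center L \<inter> ev L \<Longrightarrow> R x 0" using RZ by blast
      show "\<And>x. x \<in> DL \<inter> ev L \<Longrightarrow> R x (\<theta>' x)" using RD \<theta>'eq by simp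
      show "\<And>x. x \<in> ev L \<Longrightarrow> \<exists>u\<in>ev K. R x u" by (rule Rev)
      show "\<And>u. u \<in> ev K \<Longrightarrow> \<exists>x\<in>ev L. R x u" by (rule Rsurj_ev)
    qed
    then show ?thesis using that by blast
  qed
  obtain fo where fo: "Vector_Spaces.linear (sc L) (sc K) fo" "fo ` od L = od K" "inj_on fo (od L)"
      "\<forall>x\<in>od L. R x (fo x)" "\<forall>x\<in>DL \<inter> od L. fo x = \<theta>' x"
  proof -
    have "\<exists>f. Vector_Spaces.linear (sc L) (sc K) f \<and> f ` od L = od K \<and> inj_on f (od L) \<and>
        (\<forall>x\<in>od L. R x (f x)) \<and> (\<forall>x\<in>DL \<inter> od L. f x = \<theta>' x)"
    proof (rule P.grade_lift[where Z = "center L \<inter> od L" and ZW = "center K \<inter> od K"])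
      show "P.vs1.subspace (od L)" "P.vs2.subspace (od K)" by fact+
      show "P.vs1.subspace (center L \<inter> od L)" using P.vs1.subspace_inter[OF scL sodL] .
      show "P.vs2.subspace (center K \<inter> od K)" using P.vs2.subspace_inter[OF scK sodK] .
      show "P.vs1.subspace (DL \<inter> od L)" using P.vs1.subspace_inter[OF sDL sodL] .
      show "center L \<inter> od L \<subseteq> od L" "center K \<inter> od K \<subseteq> od K" "DL \<inter> od L \<subseteq> od L" by auto
      show "P.vs1.dim (od L) = P.vs2.dim (od K)" by fact
      show "Vector_Spaces.linear (sc L) (sc K) \<theta>'" by fact
      show "inj_on \<theta>' (DL \<inter> od L)" using inj\<theta>' by (rule inj_on_subset) auto
      show "\<theta>' ` (DL \<inter> od L) \<subseteq> od K" using \<theta>'eq \<theta>od by auto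
      show "\<And>x y u v. R x u \<Longrightarrow> R y v \<Longrightarrow> R (x + y) (u + v)" by (rule Radd)
      show "\<And>x u c. R x u \<Longrightarrow> R (sc L c x) (sc K c u)" by (rule Rsc)
      show "\<And>x u u'. R x u \<Longrightarrow> R x u' \<Longrightarrow> u \<in> od K \<Longrightarrow> u' \<in> od K \<Longrightarrow> u' - u \<in> center K \<inter> od K"
        using Rdiff od_diff[OF K] by blast
      show "\<And>x u z. R x u \<Longrightarrow> z \<in> center K \<inter> od K \<Longrightarrow> R x (u + z)" using Rshift by blast
      show "\<And>x. x \<in> od L \<Longrightarrow> R x 0 \<Longrightarrow> x \<in> center L \<inter> od L" using Rker by blast
      show "\<And>x. x \<in> center L \<inter> od L \<Longrightarrow> R x 0" using RZ by blast
      show "\<And>x. x \<in> DL \<inter> od L \<Longrightarrow> R x (\<theta>' x)" using RD \<theta>'eq by simp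
      show "\<And>x. x \<in> od L \<Longrightarrow> \<exists>u\<in>od K. R x u" by (rule Rod)
      show "\<And>u. u \<in> od K \<Longrightarrow> \<exists>x\<in>od L. R x u" by (rule Rsurj_od)
    qed
    then show ?thesis using that by blast
  qed
  define pe where "pe x = (SOME a. a \<in> ev L \<and> x - a \<in> od L)" for x
  have pe: "pe (a + b) = a" if ab: "a \<in> ev L" "b \<in> od L" for a b
  proof -
    have ex: "\<exists>a'. a' \<in> ev L \<and> (a + b) - a' \<in> od L" using ab by (intro exI[of _ a]) simp
    have "pe (a + b) \<in> ev L \<and> (a + b) - pe (a + b) \<in> od L" unfolding pe_def using someI_ex[OF ex] .
    then have h: "pe (a + b) \<in> ev L" "(a + b) - pe (a + b) \<in> od L" by auto
    have "a + b = pe (a + b) + ((a + b) - pe (a + b))" by simp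
    then show ?thesis using dec_unique[OF L ab(1) ab(2) h(1) h(2)] by simp
  qed
  define F where "F x = fe (pe x) + fo (x - pe x)" for x
  have Fdec: "F (a + b) = fe a + fo b" if "a \<in> ev L" "b \<in> od L" for a b
    unfolding F_def pe[OF that] by simp
  have fe0: "fe 0 = 0" using P.linear_0[OF fe(1)] .
  have fo0: "fo 0 = 0" using P.linear_0[OF fo(1)] .
  have Fe: "F a = fe a" if "a \<in> ev L" for a
    using Fdec[OF that od_0[OF L]] fo0 by simp
  have Fo: "F b = fo b" if "b \<in> od L" for b
    using Fdec[OF ev_0[OF L] that] fe0 by simp
  have lF: "Vector_Spaces.linear (sc L) (sc K) F"
    unfolding Vector_Spaces.linear_iff
  proof (intro conjI allI)
    show "vector_space (sc L)" "vector_space (sc K)" using lsa_vs L K by auto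
  next
    fix x y
    obtain a b where ab: "a \<in> ev L" "b \<in> od L" "x = a + b" using lsa_dec[OF L] by blast
    obtain a' b' where ab': "a' \<in> ev L" "b' \<in> od L" "y = a' + b'" using lsa_dec[OF L] by blast
    have "x + y = (a + a') + (b + b')" using ab ab' by (simp add: algebra_simps)
    then have "F (x + y) = fe (a + a') + fo (b + b')"
      using Fdec[OF ev_add[OF L ab(1) ab'(1)] od_add[OF L ab(2) ab'(2)]] by simp
    also have "\<dots> = (fe a + fo b) + (fe a' + fo b')"
      using P.linear_add[OF fe(1)] P.linear_add[OF fo(1)] by (simp add: algebra_simps)
    also have "\<dots> = F x + F y" using Fdec[OF ab(1,2)] Fdec[OF ab'(1,2)] ab(3) ab'(3) by simp
    finally show "F (x + y) = F x + F y" .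
  next
    fix c x
    obtain a b where ab: "a \<in> ev L" "b \<in> od L" "x = a + b" using lsa_dec[OF L] by blast
    have "sc L c x = sc L c a + sc L c b" using ab(3) P.vs1.scale_right_distrib by simp
    then have "F (sc L c x) = fe (sc L c a) + fo (sc L c b)"
      using Fdec[OF ev_sc[OF L ab(1)] od_sc[OF L ab(2)]] by simp
    also have "\<dots> = sc K c (fe a + fo b)"
      using P.linear_scale[OF fe(1)] P.linear_scale[OF fo(1)] P.vs2.scale_right_distrib by simp
    also have "\<dots> = sc K c (F x)" using Fdec[OF ab(1,2)] ab(3) by simp
    finally show "F (sc L c x) = sc K c (F x)" .
  qed
  have RF: "R x (F x)" for x
  proof -
    obtain a b where ab: "a \<in> ev L" "b \<in> od L" "x = a + b" using lsa_dec[OF L] by blast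
    have "R (a + b) (fe a + fo b)" using Radd fe(4) fo(4) ab(1,2) by blast
    then show ?thesis using Fdec[OF ab(1,2)] ab(3) by simp
  qed
  have Fev: "F ` ev L \<subseteq> ev K" using Fe fe(2) by auto
  have Fod: "F ` od L \<subseteq> od K" using Fo fo(2) by auto
  have injF: "inj F"
    unfolding P.linear_inj_iff_eq_0[OF lF]
  proof (intro allI impI)
    fix x assume F0: "F x = 0"
    obtain a b where ab: "a \<in> ev L" "b \<in> od L" "x = a + b" using lsa_dec[OF L] by blast
    have "fe a + fo b = 0" using F0 Fdec[OF ab(1,2)] ab(3) by simp
    moreover have "fe a \<in> ev K" using imageI[of a "ev L" fe] ab(1) unfolding fe(2) .
    moreover have "fo b \<in> od K" using imageI[of b "od L" fo] ab(2) unfolding fo(2) .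
    ultimately have z': "fe a = 0 \<and> fo b = 0" using sum_ev_od_0[OF K] by simp
    then have z: "fe a = 0" "fo b = 0" by auto
    have "a = 0" using inj_onD[OF fe(3), of a 0] z(1) fe0 ab(1) ev_0[OF L] by simp
    moreover have "b = 0" using inj_onD[OF fo(3), of b 0] z(2) fo0 ab(2) od_0[OF L] by simp
    ultimately show "x = 0" using ab(3) by simp
  qed
  have surjF: "surj F"
  proof -
    have "y \<in> range F" for y
    proof -
      obtain c d where cd: "c \<in> ev K" "d \<in> od K" "y = c + d" using lsa_dec[OF K] by blast
      have "c \<in> fe ` ev L" using cd(1) fe(2) by simp
      then obtain a where a: "a \<in> ev L" "fe a = c" by (rule imageE) simp
      have "d \<in> fo ` od L" using cd(2) fo(2) by simp
      then obtain b where b: "b \<in> od L" "fo b = d" by (rule imageE) simp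
      have "F (a + b) = y" using Fdec[OF a(1) b(1)] a b cd(3) by simp
      then show ?thesis by (metis rangeI)
    qed
    then show ?thesis by blast
  qed
  have Fhom: "F t = \<theta>' t" if "t \<in> DL" "t \<in> ev L \<or> t \<in> od L" for t
    using that Fe Fo fe(5) fo(5) by auto
  have DLb: "br L x y \<in> DL" for x y
    unfolding DL_def derived_def by (rule P.vs1.span_base) blast
  have Fgen: "F (br L x y) = \<theta>' (br L x y)" for x y
  proof -
    obtain a b where ab: "a \<in> ev L" "b \<in> od L" "x = a + b" using lsa_dec[OF L] by blast
    obtain c d where cd: "c \<in> ev L" "d \<in> od L" "y = c + d" using lsa_dec[OF L] by blast
    have e: "br L x y = (br L a c + br L a d) + (br L b c + br L b d)"
      using ab(3) cd(3) lsa_addL[OF L] lsa_addR[OF L] by simp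
    have 1: "F (br L a c) = \<theta>' (br L a c)" using Fhom DLb lsa_ee[OF L ab(1) cd(1)] by blast
    have 2: "F (br L a d) = \<theta>' (br L a d)" using Fhom DLb lsa_eo[OF L ab(1) cd(2)] by blast
    have 3: "F (br L b c) = \<theta>' (br L b c)" using Fhom DLb lsa_oe[OF L ab(2) cd(1)] by blast
    have 4: "F (br L b d) = \<theta>' (br L b d)" using Fhom DLb lsa_oo[OF L ab(2) cd(2)] by blast
    show ?thesis unfolding e P.linear_add[OF lF] P.linear_add[OF l\<theta>'] 1 2 3 4 ..
  qed
  have FDL: "F x = \<theta>' x" if "x \<in> DL" for x
  proof (rule P.linear_eq_on[OF lF l\<theta>'])
    show "x \<in> P.vs1.span {br L a b | a b. True}" using that unfolding DL_def derived_def .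
    fix g assume "g \<in> {br L a b | a b. True}"
    then show "F g = \<theta>' g" using Fgen by blast
  qed
  have Fbr: "F (br L x y) = br K (F x) (F y)" for x y
  proof -
    have "F (br L x y) = \<theta> (br L x y)" using FDL[OF DLb] \<theta>'eq[OF DLb] by simp
    also have "\<dots> = br K (F x) (F y)"
      using compat RF[of x] RF[of y] unfolding R_def by metis
    finally show ?thesis .
  qed
  have "lsa_iso L K F" unfolding lsa_iso_def bij_def
    using injF surjF lF Fev Fod Fbr by blast
  then show ?thesis unfolding lsa_isomorphic_def by blast
qed


lemma br_cen_shift:
  assumes A: "lie_superalgebra A" and u: "u - u' \<in> center A" and v: "v - v' \<in> center A"
  shows "br A u v = br A u' v'"
proof -
  define z1 where "z1 = u - u'"
  define z2 where "z2 = v - v'"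
  have e: "u = u' + z1" "v = v' + z2" unfolding z1_def z2_def by simp_all
  have "br A u v = br A u' v' + br A u' z2 + (br A z1 v' + br A z1 z2)"
    unfolding e lsa_addL[OF A] lsa_addR[OF A] by (simp add: algebra_simps)
  moreover have "br A u' z2 = 0" using br_center_R[OF A] v unfolding z2_def by blast
  moreover have "br A z1 v' = 0" "br A z1 z2 = 0" using u unfolding z1_def center_def by auto
  ultimately show ?thesis by simp
qed

lemma iso_imp_isoclinic:
  fixes L :: "('k::field, 'a::ab_group_add) lsa"
    and K :: "('k, 'b::ab_group_add) lsa"
  assumes L: "lie_superalgebra L" and K: "lie_superalgebra K"
    and iso: "L \<cong>\<^sub>L K"
  shows "isoclinic L K"
proof -
  obtain f where f: "lsa_iso L K f" using iso unfolding lsa_isomorphic_def by blast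
  have bij: "bij f" using f unfolding lsa_iso_def by (elim conjE) assumption
  have lf: "Vector_Spaces.linear (sc L) (sc K) f" using f unfolding lsa_iso_def by (elim conjE) assumption
  have fev: "f ` ev L \<subseteq> ev K" using f unfolding lsa_iso_def by (elim conjE) assumption
  have fod: "f ` od L \<subseteq> od K" using f unfolding lsa_iso_def by (elim conjE) assumption
  have fbr': "\<forall>x y. f (br L x y) = br K (f x) (f y)" using f unfolding lsa_iso_def by (elim conjE) assumption
  have fbr: "f (br L x y) = br K (f x) (f y)" for x y using fbr' by simp
  interpret P: vector_space_pair "sc L" "sc K"
    using lsa_vs[OF L] lsa_vs[OF K] by (simp add: vector_space_pair_def)
  have injf: "inj f" and surjf: "surj f" using bij unfolding bij_def by auto
  have f0: "f 0 = 0" using P.linear_0[OF lf] .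
  have finv: "f (inv f y) = y" for y using surjf by (simp add: surj_f_inv_f)
  have fcen: "f ` center L = center K"
  proof
    show "f ` center L \<subseteq> center K"
    proof
      fix w assume "w \<in> f ` center L"
      then obtain z where z: "z \<in> center L" "w = f z" by blast
      have "br K w y = 0" for y
      proof -
        have "br K w y = br K (f z) (f (inv f y))" using z(2) finv by simp
        also have "\<dots> = f (br L z (inv f y))" using fbr by simp
        also have "\<dots> = 0" using z(1) f0 unfolding center_def by simp
        finally show ?thesis .
      qed
      then show "w \<in> center K" unfolding center_def by simp
    qed
    show "center K \<subseteq> f ` center L"
    proof
      fix y assume y: "y \<in> center K"
      have "br L (inv f y) x = 0" for x
      proof -
        have "f (br L (inv f y) x) = br K y (f x)" using fbr finv by simp
        also have "\<dots> = 0" using y unfolding center_def by simp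
        finally show ?thesis using injf f0 by (metis injD)
      qed
      then have "inv f y \<in> center L" unfolding center_def by simp
      then show "y \<in> f ` center L" using finv by (metis imageI)
    qed
  qed
  have fzcos: "f ` zcos L x = zcos K (f x)" for x
  proof -
    have "f ` zcos L x = (\<lambda>z. f x + f z) ` center L"
      unfolding zcos_def image_image using P.linear_add[OF lf] by simp
    also have "\<dots> = (\<lambda>w. f x + w) ` (f ` center L)" by (simp add: image_image)
    also have "\<dots> = zcos K (f x)" unfolding fcen zcos_def ..
    finally show ?thesis .
  qed
  define \<phi> where "\<phi> X = f ` X" for X
  have \<phi>z: "\<phi> (zcos L x) = zcos K (f x)" for x unfolding \<phi>_def by (rule fzcos)
  have Rc: "f x - u \<in> center K" if "\<phi> (zcos L x) = zcos K u" for x u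
    using that \<phi>z zcos_eq[OF K] by metis
  have qi: "quot_iso L K \<phi>"
    unfolding quot_iso_def
  proof (intro conjI allI impI ballI)
    show "bij_betw \<phi> (zquot L) (zquot K)"
      unfolding bij_betw_def
    proof
      show "inj_on \<phi> (zquot L)" unfolding \<phi>_def inj_on_def using inj_image_eq_iff[OF injf] by blast
      have "\<phi> ` zquot L = range (\<lambda>x. zcos K (f x))" unfolding zquot_def image_image \<phi>z ..
      also have "\<dots> = zcos K ` range f" by (simp add: image_image)
      also have "\<dots> = zquot K" unfolding zquot_def using surjf by simp
      finally show "\<phi> ` zquot L = zquot K" .
    qed
  next
    fix x y u v assume xu: "\<phi> (zcos L x) = zcos K u" and yv: "\<phi> (zcos L y) = zcos K v"
    have cx: "f x - u \<in> center K" using Rc[OF xu] .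
    have cy: "f y - v \<in> center K" using Rc[OF yv] .
    have e: "(f x + f y) - (u + v) = (f x - u) + (f y - v)" by simp
    have "(f x + f y) - (u + v) \<in> center K" unfolding e by (rule center_add[OF K cx cy])
    then show "\<phi> (zcos L (x + y)) = zcos K (u + v)"
      unfolding \<phi>z P.linear_add[OF lf] zcos_eq[OF K] .
    have "br K (f x) (f y) = br K u v" using br_cen_shift[OF K cx cy] .
    then show "\<phi> (zcos L (br L x y)) = zcos K (br K u v)"
      unfolding \<phi>z fbr by simp
  next
    fix c x u assume xu: "\<phi> (zcos L x) = zcos K u"
    have cx: "f x - u \<in> center K" using Rc[OF xu] .
    have e: "sc K c (f x) - sc K c u = sc K c (f x - u)" by (simp add: P.vs2.scale_right_diff_distrib)
    have "sc K c (f x) - sc K c u \<in> center K" unfolding e by (rule center_sc[OF K cx])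
    then show "\<phi> (zcos L (sc L c x)) = zcos K (sc K c u)"
      unfolding \<phi>z P.linear_scale[OF lf] zcos_eq[OF K] .
  next
    fix x assume "x \<in> ev L"
    then show "\<exists>u\<in>ev K. \<phi> (zcos L x) = zcos K u" using fev \<phi>z by blast
  next
    fix x assume "x \<in> od L"
    then show "\<exists>u\<in>od K. \<phi> (zcos L x) = zcos K u" using fod \<phi>z by blast
  qed
  have gen: "f ` {br L x y | x y. True} = {br K u v | u v. True}"
  proof
    show "f ` {br L x y | x y. True} \<subseteq> {br K u v | u v. True}" using fbr by blast
    show "{br K u v | u v. True} \<subseteq> f ` {br L x y | x y. True}"
    proof
      fix w assume "w \<in> {br K u v | u v. True}"
      then obtain u v where w: "w = br K u v" by blast
      have "w = f (br L (inv f u) (inv f v))" using w fbr finv by simp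
      then show "w \<in> f ` {br L x y | x y. True}" by blast
    qed
  qed
  have fder: "f ` derived L = derived K"
    unfolding derived_def P.linear_span_image[OF lf, symmetric] gen ..
  have di: "derived_iso L K f"
    unfolding derived_iso_def
  proof (intro conjI ballI allI)
    show "bij_betw f (derived L) (derived K)"
      unfolding bij_betw_def using fder inj_on_subset[OF injf] by blast
    show "f ` (derived L \<inter> ev L) \<subseteq> ev K" using fev by blast
    show "f ` (derived L \<inter> od L) \<subseteq> od K" using fod by blast
    fix x y assume "x \<in> derived L" "y \<in> derived L"
    show "f (x + y) = f x + f y" using P.linear_add[OF lf] .
    show "f (br L x y) = br K (f x) (f y)" by (rule fbr)
  next
    fix c x
    show "f (sc L c x) = sc K c (f x)" using P.linear_scale[OF lf] .
  qed
  have compat: "f (br L l m) = br K k r"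
    if "zcos K k = \<phi> (zcos L l)" "zcos K r = \<phi> (zcos L m)" for l m k r
  proof -
    have "f l - k \<in> center K" using Rc that(1) by metis
    moreover have "f m - r \<in> center K" using Rc that(2) by metis
    ultimately show ?thesis using br_cen_shift[OF K] fbr by metis
  qed
  show ?thesis unfolding isoclinic_def using qi di compat by blast
qed

theorem theorem3p8:
  fixes L :: "('k::field, 'a::ab_group_add) lsa"
    and K :: "('k, 'b::ab_group_add) lsa"
  assumes "(2::'k) \<noteq> 0" and "(3::'k) \<noteq> 0"
    and "lie_superalgebra L" and "lie_superalgebra K"
    and "fin_dim L" and "fin_dim K"
    and "sdim L = sdim K"
  shows "isoclinic L K \<longleftrightarrow> L \<cong>\<^sub>L K"
  using isoclinic_imp_iso[OF assms(3-7)] iso_imp_isoclinic[OF assms(3,4)] by blast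

end
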